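(* Let $\mathcal{Q}\subseteq 2^E$ ($E$ finite) be homogeneous, i.e. all members of $\mathcal{Q}$ have the same cardinality. If $\mathcal{Q}$ is weakly Rayleigh then $\mathcal{Q}$ is the set of bases of a matroid on $E$.
   Context: For $\omega:2^E\to[0,\infty)$ not identically zero, $Z(\omega;\mathbf{y})=\sum_S\omega(S)\prod_{e\in S}y_e$; with subscripts denoting partial derivatives, $Z$ is Rayleigh if $Z_eZ_f-Z_{ef}Z\ge0$ for all distinct $e,f$ and all positive $\mathbf{y}$. $\mathcal{Q}$ is weakly Rayleigh if some $\omega\ge0$ with $\{S:\omega(S)>0\}=\mathcal{Q}$ has $Z(\omega;\mathbf{y})$ Rayleigh. *)

theory Defs
  imports "HOL-Analysis.Analysis"
begin

definition genpoly :: "'a set \<Rightarrow> ('a set \<Rightarrow> real) \<Rightarrow> ('a \<Rightarrow> real) \<Rightarrow> real" where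
  "genpoly E \<omega> y = (\<Sum>S\<in>Pow E. \<omega> S * (\<Prod>e\<in>S. y e))"

definition pderiv_var :: "'a \<Rightarrow> (('a \<Rightarrow> real) \<Rightarrow> real) \<Rightarrow> ('a \<Rightarrow> real) \<Rightarrow> real" where
  "pderiv_var e F y = deriv (\<lambda>t. F (y(e := t))) (y e)"

definition rayleigh :: "'a set \<Rightarrow> (('a \<Rightarrow> real) \<Rightarrow> real) \<Rightarrow> bool" where
  "rayleigh E Z \<longleftrightarrow>
     (\<forall>e\<in>E. \<forall>f\<in>E. e \<noteq> f \<longrightarrow> (\<forall>y. (\<forall>x\<in>E. y x > 0) \<longrightarrow>
        pderiv_var e Z y * pderiv_var f Z y - pderiv_var e (pderiv_var f Z) y * Z y \<ge> 0))"

definition weakly_rayleigh :: "'a set \<Rightarrow> 'a set set \<Rightarrow> bool" where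
  "weakly_rayleigh E Q \<longleftrightarrow>
     (\<exists>\<omega>. (\<forall>S\<in>Pow E. \<omega> S \<ge> 0) \<and> (\<exists>S\<in>Pow E. \<omega> S \<noteq> 0) \<and>
          {S\<in>Pow E. \<omega> S > 0} = Q \<and> rayleigh E (genpoly E \<omega>))"

definition matroid_bases :: "'a set \<Rightarrow> 'a set set \<Rightarrow> bool" where
  "matroid_bases E Q \<longleftrightarrow> Q \<subseteq> Pow E \<and> Q \<noteq> {} \<and>
     (\<forall>B1\<in>Q. \<forall>B2\<in>Q. \<forall>e\<in>B1 - B2. \<exists>f\<in>B2 - B1. insert f (B1 - {e}) \<in> Q)"

end

theory Submission
  imports Defs
begin

definition shiftw :: "'a \<Rightarrow> ('a set \<Rightarrow> real) \<Rightarrow> 'a set \<Rightarrow> real" where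
  "shiftw e \<mu> S = (if e \<in> S then 0 else \<mu> (insert e S))"

definition restw :: "'a \<Rightarrow> ('a set \<Rightarrow> real) \<Rightarrow> 'a set \<Rightarrow> real" where
  "restw e \<mu> S = (if e \<in> S then \<mu> S else 0)"

lemma gp_split:
  assumes "finite E" "e \<in> E"
  shows "genpoly E \<mu> z = (\<Sum>S\<in>Pow (E-{e}). \<mu> S * prod z S)
      + (\<Sum>S\<in>Pow (E-{e}). \<mu> (insert e S) * (z e * prod z S))"
proof -
  have P: "Pow E = Pow (E-{e}) \<union> insert e ` Pow (E-{e})"
    using Pow_insert[of e "E-{e}"] assms(2) by (simp add: insert_absorb)
  have "genpoly E \<mu> z = (\<Sum>S\<in>Pow (E-{e}) \<union> insert e ` Pow (E-{e}). \<mu> S * prod z S)"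
    unfolding genpoly_def P ..
  also have "\<dots> = (\<Sum>S\<in>Pow (E-{e}). \<mu> S * prod z S) + (\<Sum>S\<in>insert e ` Pow (E-{e}). \<mu> S * prod z S)"
    by (rule sum.union_disjoint) (use assms in auto)
  also have "(\<Sum>S\<in>insert e ` Pow (E-{e}). \<mu> S * prod z S)
      = (\<Sum>S\<in>Pow (E-{e}). \<mu> (insert e S) * prod z (insert e S))"
  proof (subst sum.reindex)
    show "inj_on (insert e) (Pow (E - {e}))"
      by (rule inj_onI) (metis Diff_insert_absorb PowD subset_Diff_insert)
  qed simp
  also have "\<dots> = (\<Sum>S\<in>Pow (E-{e}). \<mu> (insert e S) * (z e * prod z S))"
  proof (rule sum.cong)
    fix S assume "S \<in> Pow (E-{e})"
    then have "finite S" "e \<notin> S" using assms(1) finite_subset by auto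
    then show "\<mu> (insert e S) * prod z (insert e S) = \<mu> (insert e S) * (z e * prod z S)"
      by simp
  qed simp
  finally show ?thesis .
qed

lemma pderiv_gp:
  assumes "finite E" "e \<in> E"
  shows "pderiv_var e (genpoly E \<mu>) y = genpoly E (shiftw e \<mu>) y"
proof -
  define c where "c = (\<Sum>S\<in>Pow (E-{e}). \<mu> S * prod y S)"
  define K where "K = (\<Sum>S\<in>Pow (E-{e}). \<mu> (insert e S) * prod y S)"
  have 1: "genpoly E \<mu> (y(e:=t)) = c + t * K" for t
  proof -
    have p: "prod (y(e:=t)) S = prod y S" if "S \<in> Pow (E-{e})" for S
      by (rule prod.cong) (use that in auto)
    have "genpoly E \<mu> (y(e:=t)) = (\<Sum>S\<in>Pow (E-{e}). \<mu> S * prod (y(e:=t)) S)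
      + (\<Sum>S\<in>Pow (E-{e}). \<mu> (insert e S) * ((y(e:=t)) e * prod (y(e:=t)) S))"
      by (rule gp_split[OF assms])
    also have "\<dots> = c + (\<Sum>S\<in>Pow (E-{e}). \<mu> (insert e S) * (t * prod y S))"
      unfolding c_def using p by (auto intro!: sum.cong arg_cong2[where f="(+)"])
    also have "\<dots> = c + t * K" unfolding K_def by (simp add: sum_distrib_left mult_ac)
    finally show ?thesis .
  qed
  have 2: "genpoly E (shiftw e \<mu>) y = K"
  proof -
    have "genpoly E (shiftw e \<mu>) y = (\<Sum>S\<in>Pow (E-{e}). shiftw e \<mu> S * prod y S)
      + (\<Sum>S\<in>Pow (E-{e}). shiftw e \<mu> (insert e S) * (y e * prod y S))"
      by (rule gp_split[OF assms])
    also have "\<dots> = K" unfolding K_def shiftw_def by (auto intro!: sum.cong)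
    finally show ?thesis .
  qed
  have "pderiv_var e (genpoly E \<mu>) y = deriv (\<lambda>t. c + t * K) (y e)"
    unfolding pderiv_var_def 1 ..
  also have "\<dots> = K"
    by (rule DERIV_imp_deriv) (auto intro!: derivative_eq_intros)
  finally show ?thesis using 2 by simp
qed

lemma shift_rest:
  assumes "finite E" "e \<in> E" "y e = 1"
  shows "genpoly E (shiftw e \<mu>) y = genpoly E (restw e \<mu>) y"
proof -
  have "genpoly E (shiftw e \<mu>) y = (\<Sum>S\<in>Pow (E-{e}). shiftw e \<mu> S * prod y S)
      + (\<Sum>S\<in>Pow (E-{e}). shiftw e \<mu> (insert e S) * (y e * prod y S))"
    by (rule gp_split[OF assms(1,2)])
  also have "\<dots> = (\<Sum>S\<in>Pow (E-{e}). \<mu> (insert e S) * prod y S)"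
    unfolding shiftw_def by (auto intro!: sum.cong)
  also have "\<dots> = (\<Sum>S\<in>Pow (E-{e}). restw e \<mu> S * prod y S)
      + (\<Sum>S\<in>Pow (E-{e}). restw e \<mu> (insert e S) * (y e * prod y S))"
  proof -
    have "(\<Sum>S\<in>Pow (E-{e}). restw e \<mu> S * prod y S) = 0"
      by (rule sum.neutral) (auto simp: restw_def)
    moreover have "(\<Sum>S\<in>Pow (E-{e}). restw e \<mu> (insert e S) * (y e * prod y S))
       = (\<Sum>S\<in>Pow (E-{e}). \<mu> (insert e S) * prod y S)"
      by (rule sum.cong) (auto simp: restw_def assms(3))
    ultimately show ?thesis by simp
  qed
  also have "\<dots> = genpoly E (restw e \<mu>) y"
    by (rule gp_split[OF assms(1,2), symmetric])
  finally show ?thesis .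
qed

lemma rest_shift_comm: "e \<noteq> g \<Longrightarrow> restw e (shiftw g \<mu>) = shiftw g (restw e \<mu>)"
  by (rule ext) (auto simp: restw_def shiftw_def)

lemma prod_le_sub:
  fixes y :: "'a \<Rightarrow> real"
  assumes "finite T" "U \<subseteq> T" "\<forall>x\<in>T. 0 \<le> y x \<and> y x \<le> 1"
  shows "prod y T \<le> prod y U"
proof -
  have "prod y T = prod y (T - U) * prod y U"
    by (rule prod.subset_diff[OF assms(2,1)])
  moreover have "prod y (T - U) * prod y U \<le> prod y U"
  proof (rule mult_left_le_one_le)
    show "prod y (T - U) \<le> 1" using assms by (intro prod_le_1) auto
    show "0 \<le> prod y (T - U)" using assms by (intro prod_nonneg) auto
    show "prod y U \<ge> 0" using assms by (intro prod_nonneg) auto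
  qed
  ultimately show ?thesis by simp
qed


lemma second_deriv:
  assumes "finite E" "e \<in> E" "g \<in> E" "e \<noteq> g" "y e = 1" "y g = 1"
  shows "pderiv_var e (pderiv_var g (genpoly E \<omega>)) y = genpoly E (restw g (restw e \<omega>)) y"
proof -
  have h: "pderiv_var g (genpoly E \<omega>) = genpoly E (shiftw g \<omega>)"
    by (rule ext) (rule pderiv_gp[OF assms(1,3)])
  have "pderiv_var e (pderiv_var g (genpoly E \<omega>)) y = genpoly E (shiftw e (shiftw g \<omega>)) y"
    unfolding h by (rule pderiv_gp[OF assms(1,2)])
  also have "\<dots> = genpoly E (restw e (shiftw g \<omega>)) y"
    by (rule shift_rest[of E e y "shiftw g \<omega>", OF assms(1,2,5)])
  also have "\<dots> = genpoly E (shiftw g (restw e \<omega>)) y"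
    by (simp only: rest_shift_comm[OF assms(4)])
  also have "\<dots> = genpoly E (restw g (restw e \<omega>)) y"
    by (rule shift_rest[of E g y "restw e \<omega>", OF assms(1,3,6)])
  finally show ?thesis .
qed

lemma first_deriv:
  assumes "finite E" "e \<in> E" "y e = 1"
  shows "pderiv_var e (genpoly E \<omega>) y = genpoly E (restw e \<omega>) y"
proof -
  have "pderiv_var e (genpoly E \<omega>) y = genpoly E (shiftw e \<omega>) y"
    by (rule pderiv_gp[OF assms(1,2)])
  also have "\<dots> = genpoly E (restw e \<omega>) y"
    by (rule shift_rest[of E e y \<omega>, OF assms])
  finally show ?thesis .
qed

theorem corollary4p9:
  fixes E :: "'a set" and Q :: "'a set set"
  assumes "finite E"
    and "Q \<subseteq> Pow E"
    and "\<forall>A\<in>Q. \<forall>B\<in>Q. card A = card B"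
    and "weakly_rayleigh E Q"
  shows "matroid_bases E Q"
proof -
  obtain \<omega> where w0: "\<forall>S\<in>Pow E. \<omega> S \<ge> 0" and wne: "\<exists>S\<in>Pow E. \<omega> S \<noteq> 0"
    and wQ: "{S\<in>Pow E. \<omega> S > 0} = Q" and ray: "rayleigh E (genpoly E \<omega>)"
  proof -
    obtain \<omega> where \<omega>: "(\<forall>S\<in>Pow E. \<omega> S \<ge> 0) \<and> (\<exists>S\<in>Pow E. \<omega> S \<noteq> 0) \<and>
          {S\<in>Pow E. \<omega> S > 0} = Q \<and> rayleigh E (genpoly E \<omega>)"
      using assms(4) unfolding weakly_rayleigh_def by (elim exE) (erule that)
    then show ?thesis by (elim conjE) (rule that)
  qed
  have inQ: "S \<in> Q \<longleftrightarrow> S \<subseteq> E \<and> \<omega> S > 0" for S using wQ by auto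
  have Qne: "Q \<noteq> {}"
  proof -
    from wne obtain S where S: "S \<in> Pow E" "\<omega> S \<noteq> 0" by blast
    then have "\<omega> S > 0" using w0 by (simp add: order_less_le)
    then have "S \<in> Q" using S inQ by simp
    then show ?thesis by blast
  qed
  have exch: "\<exists>f\<in>B2-B1. insert f (B1-{e}) \<in> Q"
    if B1: "B1\<in>Q" and B2: "B2\<in>Q" and e: "e \<in> B1-B2" for B1 B2 e
  proof (rule ccontr)
    assume nex: "\<not> ?thesis"
    define M where "M = {S\<in>Q. e\<notin>S \<and> S \<subseteq> B1 \<union> B2}"
    have "B2 \<in> M" using B2 e unfolding M_def by auto
    then obtain B3 where B3M: "B3 \<in> M" and B3min: "\<And>S. S\<in>M \<Longrightarrow> card (B3 - B1) \<le> card (S - B1)"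
      using ex_has_least_nat[of "\<lambda>S. S \<in> M" B2 "\<lambda>S. card (S - B1)"] by blast
    define k where "k = card (B3 - B1)"
    have B3Q: "B3 \<in> Q" and eB3: "e \<notin> B3" and B3sub: "B3 \<subseteq> B1 \<union> B2"
      using B3M unfolding M_def by auto
    have B1E: "B1 \<subseteq> E" and B3E: "B3 \<subseteq> E" using B1 B3Q inQ by auto
    have finB1: "finite B1" and finB3: "finite B3"
      using B1E B3E assms(1) finite_subset by auto
    have ceq: "card B1 = card B3" using assms(3) B1 B3Q by blast
    have cardeq: "card (B1 - B3) = k"
      unfolding k_def using card_Diff_subset_Int[of B1 B3] card_Diff_subset_Int[of B3 B1]
        finB1 finB3 ceq by (simp add: Int_commute)
    have k0: "k \<noteq> 0"
    proof
      assume "k = 0"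
      then have "B1 - B3 = {}" using cardeq finB1 by simp
      then show False using e eB3 by auto
    qed
    have k1: "k \<noteq> 1"
    proof
      assume "k = 1"
      then have "card (B3 - B1) = 1" unfolding k_def .
      then obtain f where f: "B3 - B1 = {f}" by (rule card_1_singletonE)
      have "card (B1 - B3) = 1" using cardeq \<open>k = 1\<close> by simp
      then obtain e' where e': "B1 - B3 = {e'}" by (rule card_1_singletonE)
      have "e' = e" using e' e eB3 by auto
      have "insert f (B1 - {e}) = B3"
      proof -
        have "B3 = (B1 - (B1 - B3)) \<union> (B3 - B1)" by blast
        then show ?thesis using f e' \<open>e' = e\<close> by auto
      qed
      moreover have "f \<in> B2 - B1" using f B3sub by auto
      ultimately show False using nex B3Q by blast
    qed
    have "card ((B1 - B3) - {e}) = k - 1" using cardeq e eB3 finB1 by simp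
    then have "(B1 - B3) - {e} \<noteq> {}"
    proof (intro notI)
      assume "card ((B1 - B3) - {e}) = k - 1" "(B1 - B3) - {e} = {}"
      then have "k - 1 = 0" by simp
      then show False using k0 k1 by simp
    qed
    then obtain g where g: "g \<in> B1" "g \<notin> B3" "g \<noteq> e" by auto
    have eE: "e \<in> E" and gE: "g \<in> E" using e g B1E by auto
    define W where "W = (\<Sum>T\<in>Pow E. \<omega> T)"
    define w1 where "w1 = \<omega> B1"
    define w2 where "w2 = \<omega> B3"
    have w1p: "w1 > 0" and w2p: "w2 > 0" using inQ B1 B3Q unfolding w1_def w2_def by auto
    have "w1 \<le> W" unfolding W_def w1_def
      by (rule member_le_sum) (use B1E w0 assms(1) in auto)
    then have Wp: "W > 0" using w1p by simp
    define t where "t = min (1/2) (w1*w2/(2*W^2))"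
    have tp: "t > 0" unfolding t_def using w1p w2p Wp by simp
    have t1: "t \<le> 1" unfolding t_def by simp
    have tW: "W^2 * t < w1 * w2"
    proof -
      have "t \<le> w1*w2/(2*W^2)" unfolding t_def by simp
      then have "W^2 * t \<le> W^2 * (w1*w2/(2*W^2))" by (rule mult_left_mono) simp
      also have "\<dots> = w1*w2/2" using Wp by (simp add: field_simps)
      moreover have "w1 * w2 > 0" using w1p w2p by simp
      ultimately show ?thesis by linarith
    qed
    define y where "y x = (if x \<in> B1 then 1 else if x \<in> B2 then t else t^(k+1))" for x
    have tk1: "t^(k+1) \<le> t^k" using tp t1 by (intro power_decreasing) auto
    have tkl: "t^k \<le> 1" using tp t1 by (intro power_le_one) auto
    have tk2: "t^(k+1) \<le> t" using tp tkl by (simp add: mult_left_le)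
    have y01: "0 < y x \<and> y x \<le> 1" for x
      unfolding y_def using tp t1 tkl mult_le_one[of t "t^k"] by auto
    have yB1: "y x = 1" if "x \<in> B1" for x using that unfolding y_def by simp
    have y0: "0 \<le> y x" for x using y01[of x] by simp
    define p where "p T = prod y T" for T
    have pnn: "p T \<ge> 0" for T unfolding p_def using y01 by (simp add: prod_nonneg less_imp_le)
    have ple: "p T \<le> y x" if "T \<subseteq> E" "x \<in> T" for T x
    proof -
      have "p T \<le> prod y {x}" unfolding p_def
        by (rule prod_le_sub) (use that assms(1) finite_subset y0 y01 in auto)
      then show ?thesis by simp
    qed
    have pB2: "p T = t ^ card (T - B1)" if "T \<subseteq> B1 \<union> B2" "T \<subseteq> E" for T
    proof -
      have fT: "finite T" using that assms(1) finite_subset by auto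
      have "p T = prod y (T - (T \<inter> B1)) * prod y (T \<inter> B1)"
        unfolding p_def by (rule prod.subset_diff) (use fT in auto)
      also have "prod y (T \<inter> B1) = 1" by (rule prod.neutral) (auto simp: yB1)
      also have "prod y (T - (T \<inter> B1)) = prod (\<lambda>_. t) (T - B1)"
        by (rule prod.cong) (use that in \<open>auto simp: y_def\<close>)
      finally show ?thesis by simp
    qed
    define a where "a T = (if e \<notin> T \<and> g \<notin> T then \<omega> T * p T else 0)" for T
    define b where "b T = (if e \<in> T \<and> g \<notin> T then \<omega> T * p T else 0)" for T
    define c where "c T = (if e \<notin> T \<and> g \<in> T then \<omega> T * p T else 0)" for T
    define d where "d T = (if e \<in> T \<and> g \<in> T then \<omega> T * p T else 0)" for T
    define A where "A = sum a (Pow E)"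
    define B where "B = sum b (Pow E)"
    define C where "C = sum c (Pow E)"
    define D where "D = sum d (Pow E)"
    have ye: "y e = 1" and yg: "y g = 1" using e g yB1 by auto
    have gpp: "genpoly E \<mu> y = (\<Sum>T\<in>Pow E. \<mu> T * p T)" for \<mu>
      unfolding genpoly_def p_def ..
    have pt1: "\<omega> T * p T = a T + b T + c T + d T" for T
      unfolding a_def b_def c_def d_def by simp
    have pt2: "restw e \<omega> T * p T = b T + d T" for T
      unfolding b_def d_def restw_def by simp
    have pt3: "restw g \<omega> T * p T = c T + d T" for T
      unfolding c_def d_def restw_def by simp
    have pt4: "restw g (restw e \<omega>) T * p T = d T" for T
      unfolding d_def restw_def by simp
    have Zy: "genpoly E \<omega> y = A + B + C + D"
      unfolding gpp pt1 A_def B_def C_def D_def by (simp add: sum.distrib)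
    have Ze: "pderiv_var e (genpoly E \<omega>) y = B + D"
      unfolding first_deriv[of E e y, OF assms(1) eE ye] gpp pt2 B_def D_def by (simp add: sum.distrib)
    have Zg: "pderiv_var g (genpoly E \<omega>) y = C + D"
      unfolding first_deriv[of E g y, OF assms(1) gE yg] gpp pt3 C_def D_def by (simp add: sum.distrib)
    have Zeg: "pderiv_var e (pderiv_var g (genpoly E \<omega>)) y = D"
      unfolding second_deriv[of E e g y, OF assms(1) eE gE g(3)[symmetric] ye yg] gpp pt4 D_def ..
    have ypos': "\<And>x. x \<in> E \<Longrightarrow> y x > 0" using y01 by auto
    have R0: "pderiv_var e (genpoly E \<omega>) y * pderiv_var g (genpoly E \<omega>) y
       - pderiv_var e (pderiv_var g (genpoly E \<omega>)) y * genpoly E \<omega> y \<ge> 0"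
      using ray[unfolded rayleigh_def, rule_format, OF eE gE g(3)[symmetric] ypos'] .
    have R: "(B + D) * (C + D) - D * (A + B + C + D) \<ge> 0"
      using R0 unfolding Ze Zg Zeg Zy .
    have nn: "a T \<ge> 0" "b T \<ge> 0" "c T \<ge> 0" "d T \<ge> 0" if "T \<in> Pow E" for T
    proof -
      have "\<omega> T \<ge> 0" using w0 that by auto
      then have "\<omega> T * p T \<ge> 0" using pnn[of T] by simp
      then show "a T \<ge> 0" "b T \<ge> 0" "c T \<ge> 0" "d T \<ge> 0"
        unfolding a_def b_def c_def d_def by simp_all
    qed
    have Bnn: "B \<ge> 0" and Cnn: "C \<ge> 0" unfolding B_def C_def using nn by (auto intro: sum_nonneg)
    have Ale: "w2 * t^k \<le> A"
    proof -
      have "a B3 \<le> A" unfolding A_def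
        by (rule member_le_sum) (use B3E nn assms(1) in auto)
      moreover have "a B3 = w2 * t^k"
        unfolding a_def w2_def k_def using eB3 g pB2[OF B3sub B3E] by simp
      ultimately show ?thesis by simp
    qed
    have Dle: "w1 \<le> D"
    proof -
      have "d B1 \<le> D" unfolding D_def
        by (rule member_le_sum) (use B1E nn assms(1) in auto)
      moreover have "p B1 = 1" unfolding p_def by (rule prod.neutral) (auto simp: yB1)
      ultimately show ?thesis unfolding d_def w1_def using e g by simp
    qed
    have Bge: "B \<le> W * t"
      unfolding B_def W_def sum_distrib_right
    proof (rule sum_mono)
      fix T assume T: "T \<in> Pow E"
      show "b T \<le> \<omega> T * t"
      proof (cases "e \<in> T \<and> g \<notin> T \<and> \<omega> T > 0")
        case True
        then have TQ: "T \<in> Q" using inQ T by auto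
        have "\<not> T \<subseteq> B1"
        proof
          assume "T \<subseteq> B1"
          moreover have "card T = card B1" using assms(3) TQ B1 by blast
          ultimately have "T = B1" by (rule card_subset_eq[OF finB1])
          then show False using True g by auto
        qed
        then obtain x where x: "x \<in> T" "x \<notin> B1" by auto
        have "p T \<le> y x" using ple x T by auto
        also have "y x \<le> t" using x tk2 unfolding y_def by auto
        finally have "p T \<le> t" .
        then have "\<omega> T * p T \<le> \<omega> T * t" using True by (simp add: mult_left_mono)
        then show ?thesis unfolding b_def using True by simp
      next
        case False
        have w: "\<omega> T \<ge> 0" using w0 T by auto
        show ?thesis
        proof (cases "e \<in> T \<and> g \<notin> T")
          case True
          with False w have "\<omega> T = 0" by auto
          then show ?thesis unfolding b_def by simp
        next
          case False
          then have "b T = 0" unfolding b_def by auto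
          then show ?thesis using w tp by simp
        qed
      qed
    qed
    have Cge: "C \<le> W * t^k"
      unfolding C_def W_def sum_distrib_right
    proof (rule sum_mono)
      fix T assume T: "T \<in> Pow E"
      show "c T \<le> \<omega> T * t^k"
      proof (cases "e \<notin> T \<and> g \<in> T \<and> \<omega> T > 0")
        case True
        then have TQ: "T \<in> Q" using inQ T by auto
        have "p T \<le> t^k"
        proof (cases "T \<subseteq> B1 \<union> B2")
          case True2: True
          then have "T \<in> M" unfolding M_def using TQ True by auto
          then have "k \<le> card (T - B1)" using B3min k_def by auto
          then have "t ^ card (T - B1) \<le> t^k" using tp t1 by (simp add: power_decreasing)
          then show ?thesis using pB2[OF True2] T by simp
        next
          case False
          then obtain x where x: "x \<in> T" "x \<notin> B1" "x \<notin> B2" by auto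
          have "p T \<le> y x" using ple x T by auto
          also have "y x = t^(k+1)" using x unfolding y_def by auto
          finally show ?thesis using tk1 by simp
        qed
        then have "\<omega> T * p T \<le> \<omega> T * t^k" using True by (simp add: mult_left_mono)
        then show ?thesis unfolding c_def using True by simp
      next
        case False
        have w: "\<omega> T \<ge> 0" using w0 T by auto
        show ?thesis
        proof (cases "e \<notin> T \<and> g \<in> T")
          case True
          with False w have "\<omega> T = 0" by auto
          then show ?thesis unfolding c_def by simp
        next
          case False
          then have "c T = 0" unfolding c_def by auto
          then show ?thesis using w tp by simp
        qed
      qed
    qed
    have "(B + D) * (C + D) - D * (A + B + C + D) = B * C - A * D" by (simp add: algebra_simps)
    with R have "A * D \<le> B * C" by simp
    moreover have "B * C \<le> (W * t) * (W * t^k)"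
      by (rule mult_mono[OF Bge Cge]) (use Wp tp Cnn in auto)
    moreover have "(w2 * t^k) * w1 \<le> A * D"
    proof -
      have "0 \<le> w2 * t^k" using w2p tp by simp
      then have "0 \<le> A" using Ale by linarith
      then show ?thesis by (rule mult_mono[OF Ale Dle]) (use w1p in auto)
    qed
    ultimately have "(w2 * t^k) * w1 \<le> (W * t) * (W * t^k)" by linarith
    moreover have "(w2 * t^k) * w1 = (w1 * w2) * t^k" by (simp only: ac_simps)
    moreover have "(W * t) * (W * t^k) = (W^2 * t) * t^k" by (simp only: power2_eq_square ac_simps)
    ultimately have "(w1 * w2) * t^k \<le> (W^2 * t) * t^k" by simp
    then have "w1 * w2 \<le> W^2 * t" by (rule mult_right_le_imp_le) (simp add: tp)
    then show False using tW by simp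
  qed
  show ?thesis unfolding matroid_bases_def
  proof (intro conjI ballI)
    show "Q \<subseteq> Pow E" by (rule assms(2))
    show "Q \<noteq> {}" by (rule Qne)
    fix B1 B2 e assume "B1 \<in> Q" "B2 \<in> Q" "e \<in> B1 - B2"
    then show "\<exists>f\<in>B2-B1. insert f (B1-{e}) \<in> Q" by (rule exch)
  qed
qed

end
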